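(* Let $M(n,h)=\frac{2n+2-2\lceil 2\sqrt{n+h}\,\rceil}{4}$. If $A$ is a polyomino with $n$ tiles and $h$ holes such that $M(n,h)=h+\tfrac12$, then exactly one of the following occurs: (1) the dual graph of $A$ has a single cycle; (2) $A$ has a single hole of area two and all its other holes have area one; (3) $p_o(A)=2\lceil 2\sqrt{n+h}\,\rceil+2$.
   Context: A polyomino is a finite union of closed unit squares (tiles) of the square lattice, any two meeting (if at all) in a whole edge, whose interior is connected. Its holes are the bounded connected components of its complement in the plane; the area of a hole is the number of unit squares needed to fill it. The dual graph has a vertex per tile and an edge between tiles sharing an edge. $p_o(A)$ is the number of unit edges on the boundary of $A$ not bounding a hole. *)

theory Defs
  imports Complex_Main
begin

text \<open>Cells (unit squares) of the square lattice are indexed by their lower-left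
corner in int \<times> int; cell (i,j) is the closed square [i,i+1] \<times> [j,j+1].\<close>

type_synonym cell = "int \<times> int"

definition adj :: "cell \<Rightarrow> cell \<Rightarrow> bool" where
  "adj p q \<longleftrightarrow> \<bar>fst p - fst q\<bar> + \<bar>snd p - snd q\<bar> = 1"

definition adj_on :: "cell set \<Rightarrow> (cell \<times> cell) set" where
  "adj_on S = {(p, q). p \<in> S \<and> q \<in> S \<and> adj p q}"

text \<open>A union of closed unit squares has connected interior iff its tiles are
connected through shared edges.\<close>
definition polyomino :: "cell set \<Rightarrow> bool" where
  "polyomino A \<longleftrightarrow> finite A \<and> A \<noteq> {} \<and>
     (\<forall>p\<in>A. \<forall>q\<in>A. (p, q) \<in> (adj_on A)\<^sup>*)"

definition comp_of :: "cell set \<Rightarrow> cell \<Rightarrow> cell set" where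
  "comp_of S p = {q. (p, q) \<in> (adj_on S)\<^sup>*}"

text \<open>Holes: bounded connected components of the complement. The connected
components of the (open) complement of the union of tiles correspond exactly to
the edge-connected components of the set of non-tile cells; a hole is given by
the set of cells filling it, and its area is the number of those cells.\<close>
definition holes :: "cell set \<Rightarrow> cell set set" where
  "holes A = {C. \<exists>p. p \<notin> A \<and> C = comp_of (- A) p \<and> finite C}"

text \<open>Outer perimeter: number of unit boundary edges not bounding a hole, i.e.
edges between a tile and a non-tile cell lying in the unbounded component.
Each such edge corresponds to exactly one ordered pair (tile, outside cell).\<close>
definition p_o :: "cell set \<Rightarrow> nat" where
  "p_o A = card {(a, b). a \<in> A \<and> b \<notin> A \<and> adj a b \<and> (\<forall>H\<in>holes A. b \<notin> H)}"

definition dual_edges :: "cell set \<Rightarrow> cell set set" where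
  "dual_edges A = {{a, b} | a b. a \<in> A \<and> b \<in> A \<and> adj a b}"

definition is_dual_cycle :: "cell set \<Rightarrow> cell set set \<Rightarrow> bool" where
  "is_dual_cycle A E \<longleftrightarrow> E \<noteq> {} \<and> E \<subseteq> dual_edges A \<and>
     (\<forall>v\<in>\<Union>E. card {e\<in>E. v \<in> e} = 2) \<and>
     (\<forall>u\<in>\<Union>E. \<forall>v\<in>\<Union>E. (u, v) \<in> {(x, y). {x, y} \<in> E}\<^sup>*)"

definition dual_single_cycle :: "cell set \<Rightarrow> bool" where
  "dual_single_cycle A \<longleftrightarrow> (\<exists>!E. is_dual_cycle A E)"

definition M :: "nat \<Rightarrow> nat \<Rightarrow> real" where
  "M n h = (2 * real n + 2 - 2 * of_int \<lceil>2 * sqrt (real n + real h)\<rceil>) / 4"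

end

theory Submission
  imports Defs
begin


lemma adj_sym: "adj p q = adj q p"
  unfolding adj_def by (simp add: abs_minus_commute add.commute)

lemma adj_irrefl: "\<not> adj p p"
  unfolding adj_def by simp

lemma adj_iff: "adj (x,y) q \<longleftrightarrow> q \<in> {(x+1,y),(x-1,y),(x,y+1),(x,y-1)}"
  unfolding adj_def by (cases q) (auto simp: abs_if split: if_splits)

lemma nbrs_eq: "{q. adj (x,y) q} = {(x+1,y),(x-1,y),(x,y+1),(x,y-1)}"
  using adj_iff by blast

lemma card_nbrs: "card {q. adj p q} = 4"
  by (cases p) (simp add: nbrs_eq)

lemma finite_nbrs: "finite {q. adj p q}"
  by (cases p) (simp add: nbrs_eq)

lemma sym_adj_on: "sym (adj_on S)"
  unfolding sym_def adj_on_def using adj_sym by auto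

lemma adj_on_mono: "S \<subseteq> T \<Longrightarrow> adj_on S \<subseteq> adj_on T"
  unfolding adj_on_def by auto

lemma comp_of_self: "p \<in> comp_of S p"
  unfolding comp_of_def by simp

lemma comp_of_in: "q \<in> comp_of S p \<Longrightarrow> q = p \<or> q \<in> S"
  unfolding comp_of_def
  by (erule CollectE, induction rule: rtrancl_induct) (auto simp: adj_on_def)

lemma comp_of_closed:
  assumes "p \<in> S" "q \<in> comp_of S p" "r \<in> S" "adj q r"
  shows "r \<in> comp_of S p"
proof -
  have "q \<in> S" using comp_of_in[OF assms(2)] assms(1) by auto
  then have "(q, r) \<in> adj_on S" using assms unfolding adj_on_def by auto
  then show ?thesis using assms(2) unfolding comp_of_def by auto
qed

lemma comp_of_eq:
  assumes "q \<in> comp_of S p"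
  shows "comp_of S q = comp_of S p"
proof -
  have s: "sym ((adj_on S)\<^sup>*)" by (rule sym_rtrancl[OF sym_adj_on])
  have pq: "(p,q) \<in> (adj_on S)\<^sup>*" using assms unfolding comp_of_def by auto
  then have qp: "(q,p) \<in> (adj_on S)\<^sup>*" using s unfolding sym_def by blast
  show ?thesis unfolding comp_of_def
    using pq qp by (auto intro: rtrancl_trans)
qed

lemma holesE:
  assumes "H \<in> holes A"
  obtains p where "p \<notin> A" "H = comp_of (- A) p" "finite H"
  using assms unfolding holes_def by auto

lemma hole_sub: "H \<in> holes A \<Longrightarrow> H \<subseteq> - A"
  by (erule holesE) (auto dest: comp_of_in)

lemma hole_closed:
  assumes "H \<in> holes A" "x \<in> H" "y \<notin> A" "adj x y"
  shows "y \<in> H"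
  using assms(1) apply (rule holesE)
  using comp_of_closed assms by auto

lemma hole_ne: "H \<in> holes A \<Longrightarrow> H \<noteq> {}"
  by (erule holesE) (auto intro: comp_of_self)

lemma hole_eq:
  assumes "H \<in> holes A" "x \<in> H"
  shows "H = comp_of (- A) x"
  using assms(1) apply (rule holesE)
  using comp_of_eq assms by auto

lemma holes_disj:
  assumes "H1 \<in> holes A" "H2 \<in> holes A" "x \<in> H1" "x \<in> H2"
  shows "H1 = H2"
  using hole_eq assms by metis



lemma ray_infinite:
  assumes ray: "\<And>i::nat. (fst p + int i * dx, snd p + int i * dy) \<notin> A"
    and d: "\<bar>dx\<bar> + \<bar>dy\<bar> = 1"
  shows "infinite (comp_of (- A) p)"
proof
  assume fin: "finite (comp_of (- A) p)"
  define r where "r = (\<lambda>i::nat. (fst p + int i * dx, snd p + int i * dy))"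
  have p0: "p \<in> - A" using ray[of 0] by (cases p) simp
  have "r i \<in> comp_of (- A) p" for i
  proof (induction i)
    case 0 then show ?case by (cases p) (simp add: r_def comp_of_self)
  next
    case (Suc i)
    have "adj (r i) (r (Suc i))" unfolding adj_def r_def using d
      by (simp add: algebra_simps)
    moreover have "r (Suc i) \<in> - A" using ray[of "Suc i"] unfolding r_def by simp
    ultimately show ?case using comp_of_closed[OF p0 Suc] by blast
  qed
  then have "range r \<subseteq> comp_of (- A) p" by auto
  moreover have "inj r"
  proof (rule injI)
    fix i j assume "r i = r j"
    from \<open>r i = r j\<close> have "int i * dx = int j * dx" "int i * dy = int j * dy"
      unfolding r_def by auto
    then show "i = j" using d by (cases "dx = 0") auto
  qed
  then have "infinite (range r)" using finite_imageD[of r UNIV] by (auto simp: inj_on_def)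
  ultimately show False using fin finite_subset by blast
qed

lemma holes_box:
  assumes fA: "finite A"
  shows "\<exists>B. \<forall>H\<in>holes A. H \<subseteq> {-B..B} \<times> {-B..B}"
proof -
  define B where "B = (\<Sum>a\<in>A. \<bar>fst a\<bar> + \<bar>snd a\<bar>)"
  have bA: "\<bar>fst a\<bar> \<le> B \<and> \<bar>snd a\<bar> \<le> B" if "a \<in> A" for a
  proof -
    have "\<bar>fst a\<bar> + \<bar>snd a\<bar> \<le> B" unfolding B_def
      by (rule member_le_sum[OF that _ fA]) simp
    then show ?thesis using abs_ge_zero[of "fst a"] abs_ge_zero[of "snd a"] by linarith
  qed
  have "H \<subseteq> {-B..B} \<times> {-B..B}" if H: "H \<in> holes A" for H
  proof
    fix q assume qH: "q \<in> H"
    have Hq: "H = comp_of (- A) q" by (rule hole_eq[OF H qH])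
    have fH: "finite H" using H by (rule holesE)
    show "q \<in> {-B..B} \<times> {-B..B}"
    proof (rule ccontr)
      assume "q \<notin> {-B..B} \<times> {-B..B}"
      then have "fst q > B \<or> fst q < -B \<or> snd q > B \<or> snd q < -B"
        by (cases q) auto
      then obtain dx dy where d: "\<bar>dx\<bar> + \<bar>dy\<bar> = (1::int)"
        and ray: "\<And>i::nat. (fst q + int i * dx, snd q + int i * dy) \<notin> A"
      proof (elim disjE)
        assume a: "fst q > B"
        show ?thesis
        proof (rule that[of 1 0])
          fix i :: nat show "(fst q + int i * 1, snd q + int i * 0) \<notin> A"
            using bA[of "(fst q + int i * 1, snd q + int i * 0)"] a by auto
        qed simp
      next
        assume a: "fst q < -B"
        show ?thesis
        proof (rule that[of "-1" 0])
          fix i :: nat show "(fst q + int i * -1, snd q + int i * 0) \<notin> A"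
            using bA[of "(fst q + int i * -1, snd q + int i * 0)"] a by auto
        qed simp
      next
        assume a: "snd q > B"
        show ?thesis
        proof (rule that[of 0 1])
          fix i :: nat show "(fst q + int i * 0, snd q + int i * 1) \<notin> A"
            using bA[of "(fst q + int i * 0, snd q + int i * 1)"] a by auto
        qed simp
      next
        assume a: "snd q < -B"
        show ?thesis
        proof (rule that[of 0 "-1"])
          fix i :: nat show "(fst q + int i * 0, snd q + int i * -1) \<notin> A"
            using bA[of "(fst q + int i * 0, snd q + int i * -1)"] a by auto
        qed simp
      qed
      have "infinite (comp_of (- A) q)" by (rule ray_infinite[OF ray d])
      then show False using fH Hq by simp
    qed
  qed
  then show ?thesis by blast
qed

lemma finite_holes:
  assumes "finite A" shows "finite (holes A)"
proof -
  obtain B where B: "\<forall>H\<in>holes A. H \<subseteq> {-B..B} \<times> {-B..B}"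
    using holes_box[OF assms] by blast
  then have "holes A \<subseteq> Pow ({-B..B} \<times> {-B..B})" by auto
  then show ?thesis by (rule finite_subset) simp
qed

lemma finite_hole: "H \<in> holes A \<Longrightarrow> finite H"
  by (erule holesE)



definition bd :: "cell set \<Rightarrow> (cell \<times> cell) set" where
  "bd S = {(a, b). a \<in> S \<and> b \<notin> S \<and> adj a b}"

lemma card_le_rows_cols:
  assumes "finite S" shows "card S \<le> card (fst ` S) * card (snd ` S)"
proof -
  have "S \<subseteq> fst ` S \<times> snd ` S" by force
  then have "card S \<le> card (fst ` S \<times> snd ` S)"
    by (rule card_mono[rotated]) (simp add: assms)
  then show ?thesis by (simp add: card_cartesian_product)
qed

lemma bd_lower:
  assumes fS: "finite S"
  shows "2 * (card (fst ` S) + card (snd ` S)) \<le> card (bd S)"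
proof -
  define X where "X = fst ` S"
  define Y where "Y = snd ` S"
  define lx where "lx y = Min {x. (x,y) \<in> S}" for y
  define rx where "rx y = Max {x. (x,y) \<in> S}" for y
  define ly where "ly x = Min {y. (x,y) \<in> S}" for x
  define uy where "uy x = Max {y. (x,y) \<in> S}" for x
  define fL where "fL y = ((lx y, y), (lx y - 1, y))" for y
  define fR where "fR y = ((rx y, y), (rx y + 1, y))" for y
  define fD where "fD x = ((x, ly x), (x, ly x - 1))" for x
  define fU where "fU x = ((x, uy x), (x, uy x + 1))" for x
  have finr: "finite {x. (x,y) \<in> S}" for y
  proof -
    have "{x. (x,y) \<in> S} \<subseteq> fst ` S" by force
    then show ?thesis using fS finite_subset by blast
  qed
  have finc: "finite {y. (x,y) \<in> S}" for x
  proof -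
    have "{y. (x,y) \<in> S} \<subseteq> snd ` S" by force
    then show ?thesis using fS finite_subset by blast
  qed
  have L: "fL y \<in> bd S" if "y \<in> Y" for y
  proof -
    have ne: "{x. (x,y) \<in> S} \<noteq> {}" using that unfolding Y_def by force
    have "(lx y, y) \<in> S" using Min_in[OF finr ne] unfolding lx_def by simp
    moreover have "(lx y - 1, y) \<notin> S"
      using Min_le[OF finr, of "lx y - 1" y] unfolding lx_def by auto
    ultimately show ?thesis unfolding bd_def fL_def adj_def by simp
  qed
  have R: "fR y \<in> bd S" if "y \<in> Y" for y
  proof -
    have ne: "{x. (x,y) \<in> S} \<noteq> {}" using that unfolding Y_def by force
    have "(rx y, y) \<in> S" using Max_in[OF finr ne] unfolding rx_def by simp
    moreover have "(rx y + 1, y) \<notin> S"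
      using Max_ge[OF finr, of "rx y + 1" y] unfolding rx_def by auto
    ultimately show ?thesis unfolding bd_def fR_def adj_def by simp
  qed
  have D: "fD x \<in> bd S" if "x \<in> X" for x
  proof -
    have ne: "{y. (x,y) \<in> S} \<noteq> {}" using that unfolding X_def by force
    have "(x, ly x) \<in> S" using Min_in[OF finc ne] unfolding ly_def by simp
    moreover have "(x, ly x - 1) \<notin> S"
      using Min_le[OF finc, of "ly x - 1" x] unfolding ly_def by auto
    ultimately show ?thesis unfolding bd_def fD_def adj_def by simp
  qed
  have U: "fU x \<in> bd S" if "x \<in> X" for x
  proof -
    have ne: "{y. (x,y) \<in> S} \<noteq> {}" using that unfolding X_def by force
    have "(x, uy x) \<in> S" using Max_in[OF finc ne] unfolding uy_def by simp
    moreover have "(x, uy x + 1) \<notin> S"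
      using Max_ge[OF finc, of "uy x + 1" x] unfolding uy_def by auto
    ultimately show ?thesis unfolding bd_def fU_def adj_def by simp
  qed
  have fX: "finite X" "finite Y" unfolding X_def Y_def using fS by auto
  have iL: "inj_on fL Y" by (rule inj_onI) (auto simp: fL_def)
  have iR: "inj_on fR Y" by (rule inj_onI) (auto simp: fR_def)
  have iD: "inj_on fD X" by (rule inj_onI) (auto simp: fD_def)
  have iU: "inj_on fU X" by (rule inj_onI) (auto simp: fU_def)
  have cL: "card (fL ` Y) = card Y" using card_image[OF iL] .
  have cR: "card (fR ` Y) = card Y" using card_image[OF iR] .
  have cD: "card (fD ` X) = card X" using card_image[OF iD] .
  have cU: "card (fU ` X) = card X" using card_image[OF iU] .
  have d1: "fL ` Y \<inter> fR ` Y = {}" by (auto simp: fL_def fR_def)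
  have d2: "(fL ` Y \<union> fR ` Y) \<inter> fD ` X = {}" by (auto simp: fL_def fR_def fD_def)
  have d3: "(fL ` Y \<union> fR ` Y \<union> fD ` X) \<inter> fU ` X = {}"
    by (auto simp: fL_def fR_def fD_def fU_def)
  have "card (fL ` Y \<union> fR ` Y \<union> fD ` X \<union> fU ` X) = card Y + card Y + card X + card X"
    using fX d1 d2 d3 cL cR cD cU by (simp add: card_Un_disjoint)
  moreover have "fL ` Y \<union> fR ` Y \<union> fD ` X \<union> fU ` X \<subseteq> bd S" using L R D U by auto
  moreover have "finite (bd S)"
  proof -
    have "bd S \<subseteq> S \<times> (\<Union>a\<in>S. {b. adj a b})" unfolding bd_def by auto
    moreover have "finite (S \<times> (\<Union>a\<in>S. {b. adj a b}))" using fS finite_nbrs by auto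
    ultimately show ?thesis using finite_subset by blast
  qed
  ultimately have "card Y + card Y + card X + card X \<le> card (bd S)"
    by (metis card_mono)
  then show ?thesis unfolding X_def Y_def by simp
qed



definition deg :: "cell set \<Rightarrow> cell \<Rightarrow> nat" where
  "deg S v = card {b \<in> S. adj v b}"

definition conn :: "cell set \<Rightarrow> bool" where
  "conn S \<longleftrightarrow> (\<forall>p\<in>S. \<forall>q\<in>S. (p, q) \<in> (adj_on S)\<^sup>*)"

lemma de_sub: "dual_edges S \<subseteq> Pow S"
  unfolding dual_edges_def by auto

lemma de_intro: "a \<in> S \<Longrightarrow> b \<in> S \<Longrightarrow> adj a b \<Longrightarrow> {a, b} \<in> dual_edges S"
  unfolding dual_edges_def by blast

lemma fin_de: "finite S \<Longrightarrow> finite (dual_edges S)"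
  using de_sub finite_subset by (metis finite_Pow_iff)

lemma edge_card: "e \<in> dual_edges S \<Longrightarrow> card e = 2"
proof -
  assume "e \<in> dual_edges S"
  then obtain a b where "e = {a,b}" "adj a b" unfolding dual_edges_def by auto
  moreover have "a \<noteq> b" using adj_irrefl \<open>adj a b\<close> by metis
  ultimately show ?thesis by simp
qed

lemma deg_edges:
  assumes fS: "finite S" and v: "v \<in> S"
  shows "card {e \<in> dual_edges S. v \<in> e} = deg S v"
proof -
  have eq: "{e \<in> dual_edges S. v \<in> e} = (\<lambda>b. {v, b}) ` {b \<in> S. adj v b}"
  proof
    show "{e \<in> dual_edges S. v \<in> e} \<subseteq> (\<lambda>b. {v, b}) ` {b \<in> S. adj v b}"
    proof
      fix e assume "e \<in> {e \<in> dual_edges S. v \<in> e}"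
      then obtain a b where e: "e = {a,b}" "a \<in> S" "b \<in> S" "adj a b" "v \<in> e"
        unfolding dual_edges_def by auto
      show "e \<in> (\<lambda>b. {v, b}) ` {b \<in> S. adj v b}"
      proof (cases "v = a")
        case True then show ?thesis using e by auto
      next
        case False then have "v = b" using e by auto
        then show ?thesis using e adj_sym by (auto simp: insert_commute)
      qed
    qed
    show "(\<lambda>b. {v, b}) ` {b \<in> S. adj v b} \<subseteq> {e \<in> dual_edges S. v \<in> e}"
      using v unfolding dual_edges_def by blast
  qed
  have "inj_on (\<lambda>b. {v, b}) {b \<in> S. adj v b}"
    by (rule inj_onI) (auto simp: doubleton_eq_iff)
  then show ?thesis unfolding eq deg_def by (simp add: card_image)
qed

lemma handshake:
  assumes fS: "finite S"
  shows "(\<Sum>v\<in>S. deg S v) = 2 * card (dual_edges S)"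
proof -
  have "(\<Sum>v\<in>S. deg S v) = (\<Sum>v\<in>S. card {e \<in> dual_edges S. v \<in> e})"
    using deg_edges[OF fS] by simp
  also have "\<dots> = 2 * card (dual_edges S)"
  proof (rule sum_multicount[OF fS fin_de[OF fS]], rule ballI)
    fix e assume e: "e \<in> dual_edges S"
    then have "{v \<in> S. v \<in> e} = e" using de_sub by auto
    then show "card {v \<in> S. v \<in> e} = 2" using edge_card[OF e] by simp
  qed
  finally show ?thesis .
qed

lemma card_adj_on:
  assumes fS: "finite S"
  shows "card (adj_on S) = (\<Sum>v\<in>S. deg S v)"
proof -
  have "adj_on S = Sigma S (\<lambda>v. {b \<in> S. adj v b})" unfolding adj_on_def by auto
  then show ?thesis unfolding deg_def using fS by simp
qed

lemma deg_pos:
  assumes c: "conn S" and v: "v \<in> S" and w: "w \<in> S" "w \<noteq> v"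
  shows "\<exists>u. u \<in> S \<and> adj v u"
proof -
  have "(v, w) \<in> (adj_on S)\<^sup>*" using c v w unfolding conn_def by auto
  then show ?thesis using w(2)
    by (cases rule: converse_rtranclE) (auto simp: adj_on_def)
qed

lemma leaf_conn:
  assumes c: "conn S" and v: "v \<in> S" and u: "u \<in> S" "adj v u"
    and uniq: "\<And>w. w \<in> S \<Longrightarrow> adj v w \<Longrightarrow> w = u"
  shows "conn (S - {v})"
  unfolding conn_def
proof (intro ballI)
  fix p q assume p: "p \<in> S - {v}" and q: "q \<in> S - {v}"
  have uv: "u \<noteq> v" using u adj_irrefl by metis
  have pq: "(p, q) \<in> (adj_on S)\<^sup>*" using c p q unfolding conn_def by auto
  have "(q \<noteq> v \<longrightarrow> (p, q) \<in> (adj_on (S - {v}))\<^sup>*) \<and> (q = v \<longrightarrow> (p, u) \<in> (adj_on (S - {v}))\<^sup>*)"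
    using pq
  proof (induction rule: rtrancl_induct)
    case base then show ?case using p by simp
  next
    case (step y z)
    have yz: "y \<in> S" "z \<in> S" "adj y z" using step(2) unfolding adj_on_def by auto
    show ?case
    proof (cases "y = v")
      case True
      then have "z = u" using uniq yz by auto
      then show ?thesis using step(3) True uv by auto
    next
      case yv: False
      show ?thesis
      proof (cases "z = v")
        case True
        then have "y = u" using uniq yz adj_sym by metis
        then show ?thesis using step(3) yv True by auto
      next
        case False
        then have "(y, z) \<in> adj_on (S - {v})" using yz yv unfolding adj_on_def by auto
        then show ?thesis using step(3) yv False by auto
      qed
    qed
  qed
  then show "(p, q) \<in> (adj_on (S - {v}))\<^sup>*" using q by auto
qed

lemma de_remove: "dual_edges (S - {v}) = {e \<in> dual_edges S. v \<notin> e}"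
  unfolding dual_edges_def by auto

lemma card_de_remove:
  assumes fS: "finite S" and v: "v \<in> S"
  shows "card (dual_edges S) = card (dual_edges (S - {v})) + deg S v"
proof -
  have "dual_edges S = {e \<in> dual_edges S. v \<notin> e} \<union> {e \<in> dual_edges S. v \<in> e}" by auto
  then have "card (dual_edges S) = card {e \<in> dual_edges S. v \<notin> e} + card {e \<in> dual_edges S. v \<in> e}"
    using fin_de[OF fS] by (metis (no_types, lifting) card_Un_disjoint disjoint_iff finite_Un mem_Collect_eq)
  then show ?thesis using deg_edges[OF fS v] de_remove by simp
qed

lemma cycle_remove:
  assumes fS: "finite S" and v: "v \<in> S" and d: "deg S v \<le> 1"
  shows "is_dual_cycle S E \<longleftrightarrow> is_dual_cycle (S - {v}) E"
proof
  assume cy: "is_dual_cycle S E"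
  have "\<forall>e\<in>E. v \<notin> e"
  proof (rule ccontr)
    assume "\<not> (\<forall>e\<in>E. v \<notin> e)"
    then have "v \<in> \<Union>E" by auto
    then have "card {e\<in>E. v \<in> e} = 2" using cy unfolding is_dual_cycle_def by auto
    moreover have "card {e\<in>E. v \<in> e} \<le> card {e \<in> dual_edges S. v \<in> e}"
      using cy fin_de[OF fS] unfolding is_dual_cycle_def by (intro card_mono) auto
    ultimately show False using deg_edges[OF fS v] d by simp
  qed
  then show "is_dual_cycle (S - {v}) E" using cy unfolding is_dual_cycle_def de_remove by auto
next
  assume "is_dual_cycle (S - {v}) E"
  then show "is_dual_cycle S E" unfolding is_dual_cycle_def de_remove by auto
qed



lemma regular_cycle:
  assumes fS: "finite S" and ne: "S \<noteq> {}" and c: "conn S"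
    and d2: "\<And>v. v \<in> S \<Longrightarrow> deg S v = 2"
  shows "\<exists>!E. is_dual_cycle S E"
proof -
  define E0 where "E0 = dual_edges S"
  have inc: "adj_on S \<subseteq> {(x, y). {x, y} \<in> E0}" unfolding adj_on_def E0_def dual_edges_def by auto
  have key: "{y, z} \<in> E" if E: "is_dual_cycle S E" and y: "y \<in> \<Union>E" and yz: "{y, z} \<in> E0" for E y z
  proof -
    have ES: "E \<subseteq> E0" using E unfolding is_dual_cycle_def E0_def by auto
    have yS: "y \<in> S" using y ES de_sub unfolding E0_def by blast
    have sub: "{e\<in>E. y \<in> e} \<subseteq> {e\<in>E0. y \<in> e}" using ES by auto
    have c1: "card {e\<in>E. y \<in> e} = 2" using E y unfolding is_dual_cycle_def by auto
    have c2: "card {e\<in>E0. y \<in> e} = 2" using deg_edges[OF fS yS] d2[OF yS] unfolding E0_def by simp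
    have "finite {e\<in>E0. y \<in> e}" using fin_de[OF fS] unfolding E0_def by auto
    then have "{e\<in>E. y \<in> e} = {e\<in>E0. y \<in> e}" using card_subset_eq[OF _ sub] c1 c2 by simp
    then show ?thesis using yz by auto
  qed
  have cyc: "is_dual_cycle S E0"
    unfolding is_dual_cycle_def
  proof (intro conjI ballI)
    obtain v where "v \<in> S" using ne by auto
    then have "deg S v = 2" using d2 by simp
    then show "E0 \<noteq> {}" using deg_edges[OF fS \<open>v \<in> S\<close>] unfolding E0_def by auto
    show "E0 \<subseteq> dual_edges S" unfolding E0_def by simp
  next
    fix v assume "v \<in> \<Union>E0"
    then have vS: "v \<in> S" using de_sub unfolding E0_def by blast
    show "card {e\<in>E0. v \<in> e} = 2" using deg_edges[OF fS vS] d2[OF vS] unfolding E0_def by simp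
  next
    fix u v assume "u \<in> \<Union>E0" "v \<in> \<Union>E0"
    then have "u \<in> S" "v \<in> S" using de_sub unfolding E0_def by blast+
    then have "(u, v) \<in> (adj_on S)\<^sup>*" using c unfolding conn_def by auto
    then show "(u, v) \<in> {(x, y). {x, y} \<in> E0}\<^sup>*" using rtrancl_mono[OF inc] by auto
  qed
  have uniq: "E = E0" if E: "is_dual_cycle S E" for E
  proof -
    have ES: "E \<subseteq> E0" using E unfolding is_dual_cycle_def E0_def by auto
    obtain e0 where e0: "e0 \<in> E" using E unfolding is_dual_cycle_def by auto
    then have "card e0 = 2" using ES edge_card unfolding E0_def by auto
    then obtain w where w: "w \<in> e0" by (metis card.empty ex_in_conv zero_neq_numeral)
    have wU: "w \<in> \<Union>E" using w e0 by auto
    have wS: "w \<in> S" using wU ES de_sub unfolding E0_def by blast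
    have allS: "v \<in> \<Union>E" if vS: "v \<in> S" for v
    proof -
      have "(w, v) \<in> (adj_on S)\<^sup>*" using c wS vS unfolding conn_def by auto
      then show ?thesis
      proof (induction rule: rtrancl_induct)
        case base then show ?case using wU .
      next
        case (step y z)
        from step(2) have "y \<in> S" "z \<in> S" "adj y z" unfolding adj_on_def by auto
        then have "{y, z} \<in> E0" unfolding E0_def by (rule de_intro)
        then have "{y, z} \<in> E" using key[OF E step(3)] by simp
        then show ?case by auto
      qed
    qed
    have "E0 \<subseteq> E"
    proof
      fix e assume e: "e \<in> E0"
      then obtain a b where ab: "e = {a, b}" "a \<in> S" unfolding E0_def dual_edges_def by auto
      show "e \<in> E" using key[OF E allS[OF ab(2)]] e ab by simp
    qed
    then show ?thesis using ES by auto
  qed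
  show ?thesis using cyc uniq by blast
qed

lemma graph_main:
  assumes "finite S" "S \<noteq> {}" "conn S"
  shows "card S \<le> card (dual_edges S) + 1 \<and>
    (card (dual_edges S) + 1 = card S \<longrightarrow> \<not> (\<exists>E. is_dual_cycle S E)) \<and>
    (card (dual_edges S) = card S \<longrightarrow> (\<exists>!E. is_dual_cycle S E))"
  using assms
proof (induction "card S" arbitrary: S rule: less_induct)
  case less
  note fS = less.prems(1) and ne = less.prems(2) and c = less.prems(3)
  show ?case
  proof (cases "\<exists>v\<in>S. deg S v \<le> 1")
    case True
    then obtain v where v: "v \<in> S" "deg S v \<le> 1" by blast
    show ?thesis
    proof (cases "card S = 1")
      case True
      then obtain x where "S = {x}" by (rule card_1_singletonE)
      then have Sv: "S = {v}" using v(1) by auto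
      have "dual_edges S = {}" unfolding Sv dual_edges_def using adj_irrefl by blast
      then have "\<not> is_dual_cycle S E" for E unfolding is_dual_cycle_def by blast
      then show ?thesis using True \<open>dual_edges S = {}\<close> by simp
    next
      case False
      have "card S > 0" using ne fS by (simp add: card_gt_0_iff)
      then have "card S \<ge> 2" using False by linarith
      have "S - {v} \<noteq> {}"
      proof
        assume "S - {v} = {}"
        then have "S = {v}" using v(1) by auto
        then show False using False by simp
      qed
      then obtain w where w: "w \<in> S" "w \<noteq> v" by auto
      obtain u where u: "u \<in> S" "adj v u" using deg_pos[OF c v(1) w] by blast
      have finN: "finite {b \<in> S. adj v b}" using fS by (rule rev_finite_subset) blast
      have "card {b \<in> S. adj v b} \<le> Suc 0" using v(2) unfolding deg_def by simp
      then have all: "\<forall>a1\<in>{b \<in> S. adj v b}. \<forall>a2\<in>{b \<in> S. adj v b}. a1 = a2"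
        using card_le_Suc0_iff_eq[OF finN] by blast
      have uniq: "\<And>x. x \<in> S \<Longrightarrow> adj v x \<Longrightarrow> x = u"
        using all u by blast
      have dv: "deg S v = 1"
      proof -
        have "{b \<in> S. adj v b} = {u}" using uniq u by blast
        then show ?thesis unfolding deg_def by simp
      qed
      define S' where "S' = S - {v}"
      have cS': "conn S'" unfolding S'_def by (rule leaf_conn[OF c v(1) u uniq])
      have fS': "finite S'" using fS unfolding S'_def by simp
      have neS': "S' \<noteq> {}" using w unfolding S'_def by auto
      have card': "card S' = card S - 1" unfolding S'_def using v(1) fS by simp
      have lt: "card S' < card S" using card' \<open>card S \<ge> 2\<close> by simp
      have IH: "card S' \<le> card (dual_edges S') + 1 \<and>
          (card (dual_edges S') + 1 = card S' \<longrightarrow> \<not> (\<exists>E. is_dual_cycle S' E)) \<and>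
          (card (dual_edges S') = card S' \<longrightarrow> (\<exists>!E. is_dual_cycle S' E))"
        using less.hyps[OF lt fS' neS' cS'] .
      have ce: "card (dual_edges S) = card (dual_edges S') + 1"
        using card_de_remove[OF fS v(1)] dv unfolding S'_def by simp
      have cyc: "is_dual_cycle S E \<longleftrightarrow> is_dual_cycle S' E" for E
        unfolding S'_def by (rule cycle_remove[OF fS v])
      have ex: "(\<exists>E. is_dual_cycle S E) = (\<exists>E. is_dual_cycle S' E)" using cyc by simp
      have ex1: "(\<exists>!E. is_dual_cycle S E) = (\<exists>!E. is_dual_cycle S' E)" using cyc by simp
      have a1: "card S \<le> card (dual_edges S) + 1" using IH ce card' by linarith
      have a2: "card (dual_edges S) + 1 = card S \<longleftrightarrow> card (dual_edges S') + 1 = card S'"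
        using ce card' \<open>card S \<ge> 2\<close> by linarith
      have a3: "card (dual_edges S) = card S \<longleftrightarrow> card (dual_edges S') = card S'"
        using ce card' \<open>card S \<ge> 2\<close> by linarith
      show ?thesis using IH a1 a2 a3 ex ex1 by blast
    qed
  next
    case False
    then have d2: "\<And>v. v \<in> S \<Longrightarrow> deg S v \<ge> 2" by auto
    have "(\<Sum>v\<in>S. (2::nat)) \<le> (\<Sum>v\<in>S. deg S v)" using d2 by (intro sum_mono) auto
    then have ge: "2 * card S \<le> 2 * card (dual_edges S)" using handshake[OF fS] by simp
    have third: "\<exists>!E. is_dual_cycle S E" if eq: "card (dual_edges S) = card S"
    proof (rule regular_cycle[OF fS ne c])
      fix v assume vS: "v \<in> S"
      show "deg S v = 2"
      proof (rule ccontr)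
        assume "deg S v \<noteq> 2"
        then have "deg S v > 2" using d2[OF vS] by simp
        then have "(\<Sum>v\<in>S. (2::nat)) < (\<Sum>v\<in>S. deg S v)"
          using d2 vS by (intro sum_strict_mono_ex1[OF fS]) auto
        then show False using handshake[OF fS] eq by simp
      qed
    qed
    have "card S \<le> card (dual_edges S) + 1" using ge by linarith
    moreover have "card (dual_edges S) + 1 \<noteq> card S" using ge by linarith
    ultimately show ?thesis using third by blast
  qed
qed



lemma sum_ge4:
  assumes "finite T" "\<And>H. H \<in> T \<Longrightarrow> (4::nat) \<le> f H"
  shows "4 * card T \<le> sum f T"
proof -
  have "(\<Sum>H\<in>T. (4::nat)) \<le> sum f T" using assms by (intro sum_mono) auto
  then show ?thesis by simp
qed

lemma sum_ge_one:
  assumes fT: "finite T" and f4: "\<And>H. H \<in> T \<Longrightarrow> (4::nat) \<le> f H"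
    and H0: "H0 \<in> T" "f H0 \<ge> 4 + d"
  shows "4 * card T + d \<le> sum f T"
proof -
  have "sum f T = f H0 + sum f (T - {H0})" using fT H0 by (simp add: sum.remove)
  moreover have "4 * card (T - {H0}) \<le> sum f (T - {H0})" using fT f4 by (intro sum_ge4) auto
  moreover have "card (T - {H0}) + 1 = card T" using fT H0
  proof -
    have "card T > 0" using fT H0 by (auto simp: card_gt_0_iff)
    then show ?thesis using card_Diff_singleton[OF H0(1)] by simp
  qed
  ultimately show ?thesis using H0 by linarith
qed

lemma sum_ge_two:
  assumes fT: "finite T" and f4: "\<And>H. H \<in> T \<Longrightarrow> (4::nat) \<le> f H"
    and H0: "H0 \<in> T" "f H0 \<ge> 6" and H1: "H1 \<in> T" "f H1 \<ge> 6" "H1 \<noteq> H0"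
  shows "4 * card T + 4 \<le> sum f T"
proof -
  have "sum f T = f H0 + sum f (T - {H0})" using fT H0 by (simp add: sum.remove)
  moreover have "4 * card (T - {H0}) + 2 \<le> sum f (T - {H0})"
    using fT f4 H1 by (intro sum_ge_one[of _ _ H1]) auto
  moreover have "card (T - {H0}) + 1 = card T" using fT H0
  proof -
    have "card T > 0" using fT H0 by (auto simp: card_gt_0_iff)
    then show ?thesis using card_Diff_singleton[OF H0(1)] by simp
  qed
  ultimately show ?thesis using H0 by linarith
qed

lemma holes_arith:
  fixes f g :: "'a \<Rightarrow> nat"
  assumes fT: "finite T"
    and f4: "\<And>H. H \<in> T \<Longrightarrow> 4 \<le> f H"
    and g2: "\<And>H. H \<in> T \<Longrightarrow> 2 \<le> g H \<Longrightarrow> 6 \<le> f H"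
    and g3: "\<And>H. H \<in> T \<Longrightarrow> 3 \<le> g H \<Longrightarrow> 8 \<le> f H"
    and g1: "\<And>H. H \<in> T \<Longrightarrow> g H = 1 \<Longrightarrow> f H = 4"
    and g0: "\<And>H. H \<in> T \<Longrightarrow> 1 \<le> g H"
  shows "sum f T \<le> 4 * card T + 1 \<Longrightarrow> sum f T = 4 * card T \<and> \<not> (\<exists>H\<in>T. g H = 2)"
    and "sum f T = 4 * card T + 2 \<Longrightarrow> (\<exists>H\<in>T. g H = 2 \<and> (\<forall>H'\<in>T. H' \<noteq> H \<longrightarrow> g H' = 1))"
proof -
  assume le: "sum f T \<le> 4 * card T + 1"
  have all1: "g H = 1" if HT: "H \<in> T" for H
  proof (rule ccontr)
    assume "g H \<noteq> 1"
    then have "2 \<le> g H" using g0[OF HT] by simp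
    then have "4 + 2 \<le> f H" using g2[OF HT] by simp
    then have "4 * card T + 2 \<le> sum f T" using sum_ge_one[of T f H 2] fT f4 HT by blast
    then show False using le by simp
  qed
  have "sum f T = (\<Sum>H\<in>T. 4)" using g1 all1 by (intro sum.cong) auto
  then show "sum f T = 4 * card T \<and> \<not> (\<exists>H\<in>T. g H = 2)" using all1 by auto
next
  assume eq: "sum f T = 4 * card T + 2"
  obtain H where H: "H \<in> T" "g H \<noteq> 1"
  proof (rule ccontr)
    assume "\<not> thesis"
    then have "\<forall>H\<in>T. g H = 1" using that by blast
    then have "sum f T = (\<Sum>H\<in>T. 4)" using g1 by (intro sum.cong) auto
    then show False using eq by simp
  qed
  have "g H \<ge> 2" using g0[OF H(1)] H(2) by simp
  have "g H = 2"
  proof (rule ccontr)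
    assume "g H \<noteq> 2"
    then have "8 \<le> f H" using g3[OF H(1)] \<open>g H \<ge> 2\<close> by simp
    then have "4 * card T + 4 \<le> sum f T" using sum_ge_one[of T f H 4] fT f4 H(1) by simp
    then show False using eq by simp
  qed
  moreover have "\<forall>H'\<in>T. H' \<noteq> H \<longrightarrow> g H' = 1"
  proof (intro ballI impI, rule ccontr)
    fix H' assume H': "H' \<in> T" "H' \<noteq> H" "g H' \<noteq> 1"
    then have "6 \<le> f H'" using g0[OF H'(1)] g2[OF H'(1)] by simp
    moreover have "6 \<le> f H" using g2[OF H(1)] \<open>g H \<ge> 2\<close> by simp
    ultimately have "4 * card T + 4 \<le> sum f T" using sum_ge_two[of T f H H'] fT f4 H(1) H'(1) H'(2) by blast
    then show False using eq by simp
  qed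
  ultimately show "\<exists>H\<in>T. g H = 2 \<and> (\<forall>H'\<in>T. H' \<noteq> H \<longrightarrow> g H' = 1)" using H(1) by blast
qed



lemma finite_bd: "finite S \<Longrightarrow> finite (bd S)"
proof -
  assume fS: "finite S"
  have "bd S \<subseteq> S \<times> (\<Union>a\<in>S. {b. adj a b})" unfolding bd_def by auto
  moreover have "finite (S \<times> (\<Union>a\<in>S. {b. adj a b}))" using fS finite_nbrs by auto
  ultimately show ?thesis using finite_subset by blast
qed

lemma count4:
  assumes fA: "finite A"
  shows "card (bd A) + card (adj_on A) = 4 * card A"
proof -
  have e1: "bd A = Sigma A (\<lambda>a. {b. b \<notin> A \<and> adj a b})" unfolding bd_def by auto
  have e2: "adj_on A = Sigma A (\<lambda>a. {b. b \<in> A \<and> adj a b})" unfolding adj_on_def by auto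
  have f1: "finite {b. b \<notin> A \<and> adj a b}" for a by (rule rev_finite_subset[OF finite_nbrs[of a]]) blast
  have f2: "finite {b. b \<in> A \<and> adj a b}" for a by (rule rev_finite_subset[OF finite_nbrs[of a]]) blast
  have each: "card {b. b \<notin> A \<and> adj a b} + card {b. b \<in> A \<and> adj a b} = 4" for a
  proof -
    have "{b. adj a b} = {b. b \<notin> A \<and> adj a b} \<union> {b. b \<in> A \<and> adj a b}" by blast
    then have "card {b. adj a b} = card {b. b \<notin> A \<and> adj a b} + card {b. b \<in> A \<and> adj a b}"
      using f1 f2 by (simp add: card_Un_disjoint disjoint_iff)
    then show ?thesis using card_nbrs[of a] by simp
  qed
  have "card (bd A) + card (adj_on A) =
      (\<Sum>a\<in>A. card {b. b \<notin> A \<and> adj a b}) + (\<Sum>a\<in>A. card {b. b \<in> A \<and> adj a b})"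
    unfolding e1 e2 using fA f1 f2 by simp
  also have "\<dots> = (\<Sum>a\<in>A. 4)" unfolding sum.distrib[symmetric] using each by simp
  finally show ?thesis by simp
qed

definition ph :: "cell set \<Rightarrow> cell set \<Rightarrow> (cell \<times> cell) set" where
  "ph A H = {(a, b). a \<in> A \<and> b \<in> H \<and> adj a b}"

definition po_set :: "cell set \<Rightarrow> (cell \<times> cell) set" where
  "po_set A = {(a, b). a \<in> A \<and> b \<notin> A \<and> adj a b \<and> (\<forall>H\<in>holes A. b \<notin> H)}"

lemma p_o_eq: "p_o A = card (po_set A)"
  unfolding p_o_def po_set_def by simp

lemma decomp:
  assumes fA: "finite A"
  shows "card (bd A) = p_o A + (\<Sum>H\<in>holes A. card (ph A H))"
proof -
  have eq: "bd A = po_set A \<union> (\<Union>H\<in>holes A. ph A H)"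
  proof
    show "bd A \<subseteq> po_set A \<union> (\<Union>H\<in>holes A. ph A H)"
      unfolding bd_def po_set_def ph_def by blast
    show "po_set A \<union> (\<Union>H\<in>holes A. ph A H) \<subseteq> bd A"
      unfolding bd_def po_set_def ph_def using hole_sub by blast
  qed
  have fin: "finite (bd A)" by (rule finite_bd[OF fA])
  have fph: "finite (ph A H)" if "H \<in> holes A" for H
  proof -
    have "ph A H \<subseteq> bd A" using eq that by blast
    then show ?thesis using fin finite_subset by blast
  qed
  have fpo: "finite (po_set A)"
  proof -
    have "po_set A \<subseteq> bd A" using eq by blast
    then show ?thesis using fin finite_subset by blast
  qed
  have disj1: "po_set A \<inter> (\<Union>H\<in>holes A. ph A H) = {}"
    unfolding po_set_def ph_def by blast
  have disj2: "\<forall>H1\<in>holes A. \<forall>H2\<in>holes A. H1 \<noteq> H2 \<longrightarrow> ph A H1 \<inter> ph A H2 = {}"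
    unfolding ph_def using holes_disj by blast
  have "card (\<Union>H\<in>holes A. ph A H) = (\<Sum>H\<in>holes A. card (ph A H))"
    using card_UN_disjoint[OF finite_holes[OF fA] _ disj2] fph by blast
  moreover have "card (bd A) = card (po_set A) + card (\<Union>H\<in>holes A. ph A H)"
    unfolding eq using fpo fin eq disj1 by (metis card_Un_disjoint finite_Un)
  ultimately show ?thesis using p_o_eq by simp
qed

lemma ph_card:
  assumes H: "H \<in> holes A"
  shows "card (ph A H) = card (bd H)"
proof -
  have "ph A H = (\<lambda>(a, b). (b, a)) ` bd H"
  proof
    show "(\<lambda>(a, b). (b, a)) ` bd H \<subseteq> ph A H"
    proof
      fix z assume "z \<in> (\<lambda>(a, b). (b, a)) ` bd H"
      then obtain a b where z: "z = (b, a)" "a \<in> H" "b \<notin> H" "adj a b" unfolding bd_def by auto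
      have "b \<in> A" using hole_closed[OF H z(2) _ z(4)] z(3) by blast
      then show "z \<in> ph A H" unfolding ph_def using z adj_sym by auto
    qed
    show "ph A H \<subseteq> (\<lambda>(a, b). (b, a)) ` bd H"
    proof
      fix z assume "z \<in> ph A H"
      then obtain a b where z: "z = (a, b)" "a \<in> A" "b \<in> H" "adj a b" unfolding ph_def by auto
      have "a \<notin> H" using hole_sub[OF H] z(2) by blast
      then have "(b, a) \<in> bd H" unfolding bd_def using z adj_sym by auto
      then show "z \<in> (\<lambda>(a, b). (b, a)) ` bd H" using z(1) by force
    qed
  qed
  moreover have "inj_on (\<lambda>(a, b). (b, a)) (bd H)" by (rule inj_onI) auto
  ultimately show ?thesis by (simp add: card_image)
qed

lemma rc_ge1:
  assumes "finite S" "S \<noteq> {}"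
  shows "1 \<le> card (fst ` S)" "1 \<le> card (snd ` S)"
  using assms by (auto simp: Suc_le_eq card_gt_0_iff)

lemma hole_bd:
  assumes fS: "finite S" and ne: "S \<noteq> {}"
  shows "4 \<le> card (bd S)"
    and "2 \<le> card S \<Longrightarrow> 6 \<le> card (bd S)"
    and "3 \<le> card S \<Longrightarrow> 8 \<le> card (bd S)"
    and "card S = 1 \<Longrightarrow> card (bd S) = 4"
proof -
  define r where "r = card (fst ` S)"
  define c where "c = card (snd ` S)"
  have r1: "1 \<le> r" "1 \<le> c" unfolding r_def c_def using rc_ge1[OF fS ne] by auto
  have lo: "2 * (r + c) \<le> card (bd S)" unfolding r_def c_def by (rule bd_lower[OF fS])
  have rc: "card S \<le> r * c" unfolding r_def c_def by (rule card_le_rows_cols[OF fS])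
  have "4 \<le> 2 * (r + c)" using r1 by simp
  then show "4 \<le> card (bd S)" using lo by (rule order_trans)
  show "6 \<le> card (bd S)" if "2 \<le> card S"
  proof -
    have "3 \<le> r + c"
    proof (rule ccontr)
      assume "\<not> 3 \<le> r + c"
      then have "r = 1" "c = 1" using r1 by auto
      then show False using rc that by simp
    qed
    then have "6 \<le> 2 * (r + c)" by simp
    then show ?thesis using lo by (rule order_trans)
  qed
  show "8 \<le> card (bd S)" if "3 \<le> card S"
  proof -
    have "4 \<le> r + c"
    proof (rule ccontr)
      assume "\<not> 4 \<le> r + c"
      then have "(r = 1 \<and> c \<le> 2) \<or> (r = 2 \<and> c = 1)" using r1 by auto
      then have "r * c \<le> 2" by auto
      then show False using rc that by simp
    qed
    then have "8 \<le> 2 * (r + c)" by simp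
    then show ?thesis using lo by (rule order_trans)
  qed
  show "card (bd S) = 4" if c1: "card S = 1"
  proof -
    obtain x where Sx: "S = {x}" using c1 by (rule card_1_singletonE)
    have "bd S \<subseteq> {x} \<times> {b. adj x b}" unfolding bd_def Sx by auto
    then have "card (bd S) \<le> card ({x} \<times> {b. adj x b})"
      by (rule card_mono[rotated]) (simp add: finite_nbrs)
    then have "card (bd S) \<le> 4" by (simp add: card_cartesian_product card_nbrs)
    moreover have "4 \<le> 2 * (r + c)" using r1 by simp
    ultimately show ?thesis using lo by simp
  qed
qed



lemma sqrt_bound:
  fixes r c N :: nat
  assumes "N \<le> r * c"
  shows "\<lceil>2 * sqrt (real N)\<rceil> \<le> int (r + c)"
proof -
  have "(2 * sqrt (real N))\<^sup>2 = 4 * real N" by (simp add: power_mult_distrib)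
  also have "\<dots> \<le> 4 * (real r * real c)" using assms by (simp add: of_nat_mult[symmetric] del: of_nat_mult)
  also have "\<dots> \<le> (real r + real c)\<^sup>2"
  proof -
    have "0 \<le> (real r - real c)\<^sup>2" by simp
    then show ?thesis by (simp add: power2_eq_square algebra_simps)
  qed
  finally have "2 * sqrt (real N) \<le> real r + real c"
    by (rule power2_le_imp_le) simp
  then show ?thesis by (simp add: ceiling_le_iff)
qed

lemma po_lower:
  assumes fA: "finite A"
  shows "2 * \<lceil>2 * sqrt (real (card A) + real (card (holes A)))\<rceil> \<le> int (p_o A)"
proof -
  define F where "F = A \<union> \<Union>(holes A)"
  have fH: "finite (holes A)" by (rule finite_holes[OF fA])
  have fF: "finite F" unfolding F_def using fA fH finite_hole by blast
  have cU: "card (\<Union>(holes A)) = (\<Sum>H\<in>holes A. card H)"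
  proof (rule card_Union_disjoint)
    show "pairwise disjnt (holes A)"
      unfolding pairwise_def disjnt_def using holes_disj by blast
  qed (rule finite_hole)
  have "card (holes A) = (\<Sum>H\<in>holes A. 1)" by simp
  also have "\<dots> \<le> (\<Sum>H\<in>holes A. card H)"
  proof (rule sum_mono)
    fix H assume H: "H \<in> holes A"
    show "1 \<le> card H" using hole_ne[OF H] finite_hole[OF H] by (simp add: Suc_le_eq card_gt_0_iff)
  qed
  finally have hle: "card (holes A) \<le> card (\<Union>(holes A))" using cU by simp
  have "A \<inter> \<Union>(holes A) = {}" using hole_sub by blast
  then have cF: "card F = card A + card (\<Union>(holes A))"
    unfolding F_def using fA fH finite_hole by (simp add: card_Un_disjoint)
  have sub: "bd F \<subseteq> po_set A"
  proof
    fix z assume "z \<in> bd F"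
    then obtain a b where z: "z = (a, b)" "a \<in> F" "b \<notin> F" "adj a b" unfolding bd_def by auto
    have bA: "b \<notin> A" "\<forall>H\<in>holes A. b \<notin> H" using z(3) unfolding F_def by auto
    have "a \<in> A"
    proof (rule ccontr)
      assume "a \<notin> A"
      then obtain H where H: "H \<in> holes A" "a \<in> H" using z(2) unfolding F_def by auto
      then have "b \<in> H" using hole_closed[OF H bA(1) z(4)] by simp
      then show False using bA H by auto
    qed
    then show "z \<in> po_set A" unfolding po_set_def using z bA by auto
  qed
  have fpo: "finite (po_set A)"
  proof -
    have "po_set A \<subseteq> bd A" unfolding po_set_def bd_def by auto
    then show ?thesis using finite_bd[OF fA] finite_subset by blast
  qed
  have "card (bd F) \<le> p_o A" using card_mono[OF fpo sub] p_o_eq by simp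
  moreover have "2 * (card (fst ` F) + card (snd ` F)) \<le> card (bd F)" by (rule bd_lower[OF fF])
  moreover have "card A + card (holes A) \<le> card (fst ` F) * card (snd ` F)"
    using card_le_rows_cols[OF fF] cF hle by linarith
  then have "\<lceil>2 * sqrt (real (card A + card (holes A)))\<rceil> \<le> int (card (fst ` F) + card (snd ` F))"
    by (rule sqrt_bound)
  ultimately show ?thesis by simp
qed



theorem corollary1:
  fixes A :: "cell set" and n h :: nat
  assumes "polyomino A"
    and "n = card A"
    and "h = card (holes A)"
    and "M n h = real h + 1 / 2"
  shows "let P1 = dual_single_cycle A;
             P2 = (\<exists>H\<in>holes A. card H = 2 \<and> (\<forall>H'\<in>holes A. H' \<noteq> H \<longrightarrow> card H' = 1));
             P3 = (int (p_o A) = 2 * \<lceil>2 * sqrt (real n + real h)\<rceil> + 2)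
         in (P1 \<and> \<not> P2 \<and> \<not> P3) \<or> (\<not> P1 \<and> P2 \<and> \<not> P3) \<or> (\<not> P1 \<and> \<not> P2 \<and> P3)"
proof -
  have fA: "finite A" and neA: "A \<noteq> {}" and cA: "conn A"
    using assms(1) unfolding polyomino_def conn_def by auto
  define k where "k = \<lceil>2 * sqrt (real n + real h)\<rceil>"
  have "(2 * real n + 2 - 2 * real_of_int k) / 4 = real h + 1 / 2"
    using assms(4) unfolding M_def k_def by simp
  then have "real_of_int k = real n - 2 * real h" by (simp add: field_simps)
  then have "(real_of_int k) = real_of_int (int n - 2 * int h)" by simp
  then have kn: "k = int n - 2 * int h" by (simp only: of_int_eq_iff)
  define e where "e = card (dual_edges A)"
  define po where "po = p_o A"
  define S where "S = (\<Sum>H\<in>holes A. card (bd H))"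
  have c1: "card (bd A) + 2 * e = 4 * n"
    using count4[OF fA] card_adj_on[OF fA] handshake[OF fA] assms(2) unfolding e_def by simp
  have c2: "card (bd A) = po + S"
    using decomp[OF fA] ph_card unfolding po_def S_def by simp
  have G: "n \<le> e + 1" "e + 1 = n \<Longrightarrow> \<not> (\<exists>E. is_dual_cycle A E)" "e = n \<Longrightarrow> (\<exists>!E. is_dual_cycle A E)"
    using graph_main[OF fA neA cA] assms(2) unfolding e_def by auto
  have pok: "2 * k \<le> int po"
    using po_lower[OF fA] assms(2,3) unfolding po_def k_def by simp
  have fH: "finite (holes A)" by (rule finite_holes[OF fA])
  have hfin: "\<And>H. H \<in> holes A \<Longrightarrow> finite H" by (rule finite_hole)
  have hne: "\<And>H. H \<in> holes A \<Longrightarrow> H \<noteq> {}" by (rule hole_ne)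
  have f4: "\<And>H. H \<in> holes A \<Longrightarrow> 4 \<le> card (bd H)" using hole_bd(1) hfin hne by blast
  have g2: "\<And>H. H \<in> holes A \<Longrightarrow> 2 \<le> card H \<Longrightarrow> 6 \<le> card (bd H)" using hole_bd(2) hfin hne by blast
  have g3: "\<And>H. H \<in> holes A \<Longrightarrow> 3 \<le> card H \<Longrightarrow> 8 \<le> card (bd H)" using hole_bd(3) hfin hne by blast
  have g1: "\<And>H. H \<in> holes A \<Longrightarrow> card H = 1 \<Longrightarrow> card (bd H) = 4" using hole_bd(4) hfin hne by blast
  have g0: "\<And>H. H \<in> holes A \<Longrightarrow> 1 \<le> card H"
    using hfin hne by (simp add: Suc_le_eq card_gt_0_iff)
  note HA = holes_arith[of "holes A" "\<lambda>H. card (bd H)" card, OF fH f4 g2 g3 g1 g0]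
  have S4: "4 * h \<le> S" unfolding S_def assms(3) by (rule sum_ge4[OF fH f4])
  have eq: "int po + int S + 2 * int e = 4 * int n" using c1 c2 by linarith
  define P1 where "P1 = dual_single_cycle A"
  define P2 where "P2 = (\<exists>H\<in>holes A. card H = 2 \<and> (\<forall>H'\<in>holes A. H' \<noteq> H \<longrightarrow> card H' = 1))"
  define P3 where "P3 = (int po = 2 * k + 2)"
  have "(P1 \<and> \<not> P2 \<and> \<not> P3) \<or> (\<not> P1 \<and> P2 \<and> \<not> P3) \<or> (\<not> P1 \<and> \<not> P2 \<and> P3)"
  proof (cases "e = n")
    case True
    then have "P1" unfolding P1_def dual_single_cycle_def using G(3) by simp
    have "int po = 2 * k" "S = 4 * h" using eq True kn pok S4 by linarith+
    then have "\<not> P3" "\<not> P2" using HA(1) unfolding P3_def P2_def S_def assms(3) by auto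
    then show ?thesis using \<open>P1\<close> by blast
  next
    case False
    then have "e + 1 = n" using G(1) eq kn pok S4 by linarith
    then have "\<not> P1" unfolding P1_def dual_single_cycle_def using G(2) by blast
    have sum: "int po + int S = 2 * k + 4 * int h + 2" using eq \<open>e + 1 = n\<close> kn by linarith
    consider "int po = 2 * k + 2" | "int po = 2 * k + 1" | "int po = 2 * k" using sum pok S4 by linarith
    then show ?thesis
    proof cases
      case 1
      then have "S = 4 * h" using sum by linarith
      then have "\<not> P2" using HA(1) unfolding P2_def S_def assms(3) by auto
      then show ?thesis using \<open>\<not> P1\<close> 1 unfolding P3_def by blast
    next
      case 2
      then have "S = 4 * h + 1" using sum by linarith
      then show ?thesis using HA(1) unfolding S_def assms(3) by auto
    next
      case 3
      then have "S = 4 * h + 2" using sum by linarith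
      then have "P2" using HA(2) unfolding P2_def S_def assms(3) by auto
      moreover have "\<not> P3" using 3 unfolding P3_def by simp
      ultimately show ?thesis using \<open>\<not> P1\<close> by blast
    qed
  qed
  then show ?thesis unfolding Let_def P1_def P2_def P3_def po_def k_def .
qed

end
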